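(* Let $\alpha\in(0,1)$ and let $\phi:[0,1]\to[0,\infty)$ be twice continuously differentiable on $(0,1]$ and such that there exist finite constants $W>0$, $c$, $c'$ with $$(2-\alpha)W p^{\alpha-2}+c'\le|\phi^{(2)}(p)|\le(2-\alpha)Wp^{\alpha-2}+c\qquad\text{for all }p\in(0,1].$$ Then for $k\ge3$, $$R^*(n,k;\phi)\gtrsim\frac{k^{2-2\alpha}}{n}.$$
   Context: For an integer $k\ge1$, $\mathcal{M}_k$ denotes the set of probability vectors $P=(p_1,\dots,p_k)$ on $\{1,\dots,k\}$; $\theta(P)=\sum_{i=1}^k\phi(p_i)$. With $N\sim\mathrm{Multinomial}(n,P)$ the histogram of $n$ i.i.d. samples from $P$, $R^*(n,k;\phi)=\inf_{\hat\theta}\sup_{P\in\mathcal{M}_k}\mathbb{E}[(\hat\theta(N)-\theta(P))^2]$, infimum over all real-valued estimators of the histogram. $a\gtrsim b$ means $a\ge Cb$ for a positive constant $C$ not depending on $n,k$ (possibly depending on $\phi,\alpha$). Differentiability at $1$ is one-sided. *)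

theory Defs
  imports "HOL-Analysis.Analysis"
begin

definition prob_vectors :: "nat \<Rightarrow> (nat \<Rightarrow> real) set" where
  "prob_vectors k = {P. (\<forall>i\<in>{1..k}. 0 \<le> P i) \<and> (\<forall>i. i \<notin> {1..k} \<longrightarrow> P i = 0)
                        \<and> (\<Sum>i=1..k. P i) = 1}"

definition histograms :: "nat \<Rightarrow> nat \<Rightarrow> (nat \<Rightarrow> nat) set" where
  "histograms n k = {N. (\<forall>i. i \<notin> {1..k} \<longrightarrow> N i = 0) \<and> (\<Sum>i=1..k. N i) = n}"

definition multinomial_prob :: "nat \<Rightarrow> nat \<Rightarrow> (nat \<Rightarrow> real) \<Rightarrow> (nat \<Rightarrow> nat) \<Rightarrow> real" where
  "multinomial_prob n k P N = fact n / (\<Prod>i=1..k. fact (N i)) * (\<Prod>i=1..k. P i ^ N i)"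

definition functional :: "(real \<Rightarrow> real) \<Rightarrow> nat \<Rightarrow> (nat \<Rightarrow> real) \<Rightarrow> real" where
  "functional \<phi> k P = (\<Sum>i=1..k. \<phi> (P i))"

definition mse :: "nat \<Rightarrow> nat \<Rightarrow> (real \<Rightarrow> real) \<Rightarrow> ((nat \<Rightarrow> nat) \<Rightarrow> real) \<Rightarrow> (nat \<Rightarrow> real) \<Rightarrow> real" where
  "mse n k \<phi> est P = (\<Sum>N\<in>histograms n k. multinomial_prob n k P N * (est N - functional \<phi> k P)\<^sup>2)"

text \<open>Minimax risk R*(n,k;phi), valued in the extended reals (so no junk values for Sup).\<close>
definition minimax_risk :: "nat \<Rightarrow> nat \<Rightarrow> (real \<Rightarrow> real) \<Rightarrow> ereal" where
  "minimax_risk n k \<phi> = (INF est. SUP P\<in>prob_vectors k. ereal (mse n k \<phi> est P))"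

end

theory Submission
  imports Defs
begin


lemma hist_zero: "histograms n 0 = (if n = 0 then {\<lambda>_. 0} else {})"
  by (auto simp: histograms_def)

lemma hist_decomp:
  "histograms n (Suc k) = (\<Union>j\<in>{..n}. (\<lambda>N. N(Suc k := j)) ` histograms (n - j) k)"
proof (intro equalityI subsetI)
  fix N assume N: "N \<in> histograms n (Suc k)"
  define j where "j = N (Suc k)"
  define N' where "N' = N(Suc k := 0)"
  have s: "(\<Sum>i=1..k. N i) + j = n" using N by (simp add: histograms_def j_def)
  have "(\<Sum>i=1..k. N' i) = (\<Sum>i=1..k. N i)" unfolding N'_def by (rule sum.cong) auto
  hence "N' \<in> histograms (n - j) k" using N s
    by (auto simp: histograms_def N'_def)
  moreover have "N = N'(Suc k := j)" by (auto simp: N'_def j_def)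
  moreover have "j \<in> {..n}" using s by auto
  ultimately show "N \<in> (\<Union>j\<in>{..n}. (\<lambda>N. N(Suc k := j)) ` histograms (n - j) k)" by blast
next
  fix N assume "N \<in> (\<Union>j\<in>{..n}. (\<lambda>N. N(Suc k := j)) ` histograms (n - j) k)"
  then obtain j N' where j: "j \<le> n" and N': "N' \<in> histograms (n - j) k" and NN: "N = N'(Suc k := j)" by auto
  have "(\<Sum>i=1..k. N i) = (\<Sum>i=1..k. N' i)" unfolding NN by (rule sum.cong) auto
  then show "N \<in> histograms n (Suc k)" using N' j NN by (auto simp: histograms_def)
qed

lemma hist_finite: "finite (histograms n k)"
proof (induction k arbitrary: n)
  case 0 then show ?case by (simp add: hist_zero)
next
  case (Suc k) then show ?case by (simp add: hist_decomp)
qed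

lemma multinomial_thm:
  "(\<Sum>N\<in>histograms n k. fact n / (\<Prod>i=1..k. fact (N i)) * (\<Prod>i=1..k. x i ^ N i)) = (\<Sum>i=1..k. x i) ^ (n::nat)" for x :: "nat \<Rightarrow> real"
proof (induction k arbitrary: n)
  case 0 then show ?case by (simp add: hist_zero)
next
  case (Suc k)
  let ?g = "\<lambda>n k N. fact n / (\<Prod>i=1..k. fact (N i)) * (\<Prod>i=1..k. x i ^ N i) :: real"
  have inj: "inj_on (\<lambda>N. N(Suc k := j)) (histograms m k)" for j m
  proof (rule inj_onI)
    fix N1 N2 assume a: "N1 \<in> histograms m k" "N2 \<in> histograms m k" "N1(Suc k := j) = N2(Suc k := j)"
    show "N1 = N2"
    proof
      fix i show "N1 i = N2 i"
      proof (cases "i = Suc k")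
        case True then show ?thesis using a(1,2) by (auto simp: histograms_def)
      next
        case False then show ?thesis using a(3) by (metis fun_upd_other)
      qed
    qed
  qed
  have "(\<Sum>N\<in>histograms n (Suc k). ?g n (Suc k) N)
      = (\<Sum>j\<in>{..n}. \<Sum>N\<in>(\<lambda>N. N(Suc k := j)) ` histograms (n - j) k. ?g n (Suc k) N)"
    unfolding hist_decomp
    by (rule sum.UNION_disjoint) (auto simp: hist_finite, metis fun_upd_same)
  also have "\<dots> = (\<Sum>j\<in>{..n}. \<Sum>N\<in>histograms (n - j) k. ?g n (Suc k) (N(Suc k := j)))"
    by (rule sum.cong[OF refl], rule sum.reindex[OF inj, unfolded comp_def])
  also have "\<dots> = (\<Sum>j\<in>{..n}. of_nat (n choose j) * x (Suc k) ^ j * (\<Sum>N\<in>histograms (n - j) k. ?g (n-j) k N))"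
  proof (rule sum.cong[OF refl])
    fix j assume j: "j \<in> {..n}"
    show "(\<Sum>N\<in>histograms (n - j) k. ?g n (Suc k) (N(Suc k := j))) =
          of_nat (n choose j) * x (Suc k) ^ j * (\<Sum>N\<in>histograms (n - j) k. ?g (n-j) k N)"
      unfolding sum_distrib_left
    proof (rule sum.cong[OF refl])
      fix N
      have p1: "(\<Prod>i=1..k. fact ((N(Suc k := j)) i)) = (\<Prod>i=1..k. fact (N i) :: real)"
        by (rule prod.cong) auto
      have p2: "(\<Prod>i=1..k. x i ^ (N(Suc k := j)) i) = (\<Prod>i=1..k. x i ^ N i)"
        by (rule prod.cong) auto
      have pos: "(\<Prod>i=1..k. fact (N i) :: real) > 0" by (rule prod_pos) auto
      have b: "real (n choose j) = fact n / (fact j * fact (n - j))" using j by (simp add: binomial_fact)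
      show "?g n (Suc k) (N(Suc k := j)) = of_nat (n choose j) * x (Suc k) ^ j * ?g (n-j) k N"
        using pos by (simp add: p1 p2 b field_simps)
    qed
  qed
  also have "\<dots> = (\<Sum>j\<in>{..n}. of_nat (n choose j) * x (Suc k) ^ j * (\<Sum>i=1..k. x i) ^ (n - j))"
    using Suc.IH by simp
  also have "\<dots> = (x (Suc k) + (\<Sum>i=1..k. x i)) ^ n" by (rule binomial_ring[symmetric])
  finally show ?case by (simp add: add.commute)
qed



lemma sqrt_le_min: fixes a b :: real assumes "0 \<le> a" "0 \<le> b"
  shows "sqrt (a * b) \<le> min a b + (a + b) / 4"
proof -
  have key: "x * y \<le> (x + y / 4)^2" for x y :: real
  proof -
    have "0 \<le> (x - y/4)^2" by simp
    thus ?thesis by (simp add: power2_eq_square algebra_simps)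
  qed
  have "a * b \<le> (min a b + max a b / 4)^2"
    using key[of a b] key[of b a] by (cases "a \<le> b") (auto simp: min_def max_def mult.commute)
  moreover have "0 \<le> min a b + max a b / 4" using assms by auto
  ultimately have "sqrt (a*b) \<le> min a b + max a b / 4"
    by (simp add: real_le_lsqrt real_sqrt_le_iff)
  also have "\<dots> \<le> min a b + (a + b) / 4" using assms by (auto simp: max_def)
  finally show ?thesis .
qed

lemma lecam_finite:
  fixes a b e :: "'x \<Rightarrow> real" and u v B :: real
  assumes fin: "finite H" and nn: "\<And>N. N \<in> H \<Longrightarrow> 0 \<le> a N" "\<And>N. N \<in> H \<Longrightarrow> 0 \<le> b N"
    and sa: "(\<Sum>N\<in>H. a N) = 1" and sb: "(\<Sum>N\<in>H. b N) = 1"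
    and B: "B \<le> (\<Sum>N\<in>H. sqrt (a N * b N))"
  shows "(B - 1/2) * (u - v)^2 / 2 \<le> (\<Sum>N\<in>H. a N * (e N - u)^2) + (\<Sum>N\<in>H. b N * (e N - v)^2)"
proof -
  have "B \<le> (\<Sum>N\<in>H. min (a N) (b N) + (a N + b N) / 4)"
    using B sum_mono[of H "\<lambda>N. sqrt (a N * b N)"] sqrt_le_min nn
    by (smt (verit, best) sum_mono)
  also have "\<dots> = (\<Sum>N\<in>H. min (a N) (b N)) + 1/2"
    by (simp add: sum.distrib sum_divide_distrib[symmetric] sa sb)
  finally have M: "B - 1/2 \<le> (\<Sum>N\<in>H. min (a N) (b N))" by simp
  have pt: "min (a N) (b N) * ((u - v)^2 / 2) \<le> a N * (e N - u)^2 + b N * (e N - v)^2" if "N \<in> H" for N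
  proof -
    have q: "(u - v)^2 / 2 \<le> (e N - u)^2 + (e N - v)^2"
    proof -
      have "(e N - u)^2 + (e N - v)^2 - (u - v)^2 / 2 = (2 * e N - u - v)^2 / 2"
        by (simp add: power2_eq_square field_simps)
      moreover have "0 \<le> (2 * e N - u - v)^2 / 2" by simp
      ultimately show ?thesis by linarith
    qed
    have "min (a N) (b N) * ((u - v)^2 / 2) \<le> min (a N) (b N) * ((e N - u)^2 + (e N - v)^2)"
      using q nn[OF that] by (intro mult_left_mono) auto
    also have "\<dots> \<le> a N * (e N - u)^2 + b N * (e N - v)^2"
      by (simp add: distrib_left min_def mult_right_mono)
    finally show ?thesis .
  qed
  have "(B - 1/2) * (u - v)^2 / 2 \<le> (\<Sum>N\<in>H. min (a N) (b N)) * ((u - v)^2 / 2)"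
    using M by (simp add: mult_right_mono)
  also have "\<dots> = (\<Sum>N\<in>H. min (a N) (b N) * ((u - v)^2 / 2))" by (simp add: sum_distrib_right)
  also have "\<dots> \<le> (\<Sum>N\<in>H. a N * (e N - u)^2 + b N * (e N - v)^2)" by (rule sum_mono) (rule pt)
  finally show ?thesis by (simp add: sum.distrib)
qed

lemma mp_sum: "(\<Sum>N\<in>histograms n k. multinomial_prob n k P N) = (\<Sum>i=1..k. P i) ^ n"
  unfolding multinomial_prob_def by (rule multinomial_thm)

lemma mp_nonneg: assumes "\<forall>i\<in>{1..k}. 0 \<le> P i" shows "0 \<le> multinomial_prob n k P N"
  unfolding multinomial_prob_def using assms by (intro mult_nonneg_nonneg divide_nonneg_nonneg prod_nonneg) auto

lemma mp_sqrt:
  assumes "\<forall>i\<in>{1..k}. 0 \<le> P i" "\<forall>i\<in>{1..k}. 0 \<le> Q i"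
  shows "sqrt (multinomial_prob n k P N * multinomial_prob n k Q N)
       = multinomial_prob n k (\<lambda>i. sqrt (P i * Q i)) N"
proof -
  define c where "c = fact n / (\<Prod>i=1..k. fact (N i) :: real)"
  have c0: "0 \<le> c" unfolding c_def by (intro divide_nonneg_nonneg prod_nonneg) auto
  have "(\<Prod>i=1..k. P i ^ N i) * (\<Prod>i=1..k. Q i ^ N i) = (\<Prod>i=1..k. (sqrt (P i * Q i) ^ N i)^2)"
    unfolding prod.distrib[symmetric]
  proof (rule prod.cong[OF refl])
    fix i assume "i \<in> {1..k}"
    then have "0 \<le> P i * Q i" using assms by auto
    then show "P i ^ N i * Q i ^ N i = (sqrt (P i * Q i) ^ N i)^2"
    proof -
      have "(sqrt (P i * Q i) ^ N i)^2 = (sqrt (P i * Q i) * sqrt (P i * Q i)) ^ N i"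
        by (simp only: power2_eq_square power_mult_distrib)
      also have "\<dots> = (P i * Q i) ^ N i" using \<open>0 \<le> P i * Q i\<close> by simp
      finally show ?thesis by (simp add: power_mult_distrib)
    qed
  qed
  also have "\<dots> = (\<Prod>i=1..k. sqrt (P i * Q i) ^ N i)^2" by (simp add: prod_power_distrib)
  finally have e: "(\<Prod>i=1..k. P i ^ N i) * (\<Prod>i=1..k. Q i ^ N i) = (\<Prod>i=1..k. sqrt (P i * Q i) ^ N i)^2" .
  have nn: "0 \<le> (\<Prod>i=1..k. sqrt (P i * Q i) ^ N i)" using assms by (intro prod_nonneg zero_le_power real_sqrt_ge_zero mult_nonneg_nonneg) auto
  have "multinomial_prob n k P N * multinomial_prob n k Q N = (c * (\<Prod>i=1..k. sqrt (P i * Q i) ^ N i))^2"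
    unfolding multinomial_prob_def c_def[symmetric] using e by (simp add: power2_eq_square algebra_simps)
  then show ?thesis using c0 nn unfolding multinomial_prob_def c_def[symmetric] by simp
qed

lemma two_point:
  assumes P: "P \<in> prob_vectors k" and Q: "Q \<in> prob_vectors k"
    and B: "B \<le> (\<Sum>i=1..k. sqrt (P i * Q i)) ^ n"
  shows "ereal ((B - 1/2) * (functional \<phi> k P - functional \<phi> k Q)^2 / 4) \<le> minimax_risk n k \<phi>"
  unfolding minimax_risk_def
proof (rule INF_greatest)
  fix est :: "(nat \<Rightarrow> nat) \<Rightarrow> real"
  have Pn: "\<forall>i\<in>{1..k}. 0 \<le> P i" and Ps: "(\<Sum>i=1..k. P i) = 1" using P by (auto simp: prob_vectors_def)
  have Qn: "\<forall>i\<in>{1..k}. 0 \<le> Q i" and Qs: "(\<Sum>i=1..k. Q i) = 1" using Q by (auto simp: prob_vectors_def)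
  have "(B - 1/2) * (functional \<phi> k P - functional \<phi> k Q)^2 / 2 \<le> mse n k \<phi> est P + mse n k \<phi> est Q"
    unfolding mse_def
  proof (rule lecam_finite[OF hist_finite])
    show "\<And>N. 0 \<le> multinomial_prob n k P N" "\<And>N. 0 \<le> multinomial_prob n k Q N"
      using mp_nonneg Pn Qn by auto
    show "(\<Sum>N\<in>histograms n k. multinomial_prob n k P N) = 1" by (simp only: mp_sum Ps) simp
    show "(\<Sum>N\<in>histograms n k. multinomial_prob n k Q N) = 1" by (simp only: mp_sum Qs) simp
    show "B \<le> (\<Sum>N\<in>histograms n k. sqrt (multinomial_prob n k P N * multinomial_prob n k Q N))"
      using B by (simp add: mp_sqrt[OF Pn Qn] mp_sum)
  qed
  hence "(B - 1/2) * (functional \<phi> k P - functional \<phi> k Q)^2 / 4 \<le> max (mse n k \<phi> est P) (mse n k \<phi> est Q)"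
    by linarith
  moreover have "ereal (mse n k \<phi> est P) \<le> (SUP P\<in>prob_vectors k. ereal (mse n k \<phi> est P))"
    using P by (rule SUP_upper)
  moreover have "ereal (mse n k \<phi> est Q) \<le> (SUP P\<in>prob_vectors k. ereal (mse n k \<phi> est P))"
    using Q by (rule SUP_upper)
  ultimately show "ereal ((B - 1/2) * (functional \<phi> k P - functional \<phi> k Q)^2 / 4)
      \<le> (SUP P\<in>prob_vectors k. ereal (mse n k \<phi> est P))"
    by (cases "mse n k \<phi> est P \<le> mse n k \<phi> est Q") (auto simp: max_def intro: order_trans[rotated])
qed



lemma pair_ineq:
  fixes f f1 f2 :: "real \<Rightarrow> real" and W \<alpha> p0 s \<eta> :: real
  assumes d1: "\<forall>x\<in>{0<..<1}. DERIV f x :> f1 x" and d2: "\<forall>x\<in>{0<..<1}. DERIV f1 x :> f2 x"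
    and lb: "\<forall>x\<in>{0<..p0}. W * x powr (\<alpha> - 2) / 2 \<le> f2 x"
    and s: "0 < s" "2 * s \<le> p0" "2 * s < 1" and eta: "0 < \<eta>" "\<eta> \<le> s / 4" and al: "\<alpha> \<le> 2" and W: "0 \<le> W"
  shows "\<eta> * (s * W * (2 * s) powr (\<alpha> - 2) / 4) \<le> f s + f (2 * s) - f (s + \<eta>) - f (2 * s - \<eta>)"
proof -
  define K where "K = s * W * (2 * s) powr (\<alpha> - 2) / 4"
  have g: "K \<le> f1 (2 * s - x) - f1 (s + x)" if x: "0 \<le> x" "x \<le> \<eta>" for x
  proof -
    have ab: "s + x < 2 * s - x" using x eta s by linarith
    obtain z where z: "s + x < z" "z < 2 * s - x" and eq: "f1 (2 * s - x) - f1 (s + x) = ((2 * s - x) - (s + x)) * f2 z"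
      using MVT2[OF ab, of f1 f2] d2 x eta s by force
    have zp: "z \<in> {0<..p0}" using z x s by auto
    have "W * (2 * s) powr (\<alpha> - 2) / 2 \<le> W * z powr (\<alpha> - 2) / 2"
      using powr_mono2'[of "\<alpha> - 2" z "2 * s"] z x s al W by (intro divide_right_mono mult_left_mono) auto
    also have "\<dots> \<le> f2 z" using lb zp by auto
    finally have f2z: "W * (2 * s) powr (\<alpha> - 2) / 2 \<le> f2 z" .
    have "K = (s / 2) * (W * (2 * s) powr (\<alpha> - 2) / 2)" unfolding K_def by simp
    also have "\<dots> \<le> ((2 * s - x) - (s + x)) * f2 z"
      using f2z x eta s W by (intro mult_mono) auto
    finally show ?thesis using eq by simp
  qed
  define \<psi> where "\<psi> x = f (s + x) + f (2 * s - x)" for x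
  have dpsi: "DERIV \<psi> x :> f1 (s + x) - f1 (2 * s - x)" if x: "0 \<le> x" "x \<le> \<eta>" for x
  proof -
    have i1: "s + x \<in> {0<..<1}" "2 * s - x \<in> {0<..<1}" using x s eta by auto
    have a: "DERIV (\<lambda>x. f (s + x)) x :> f1 (s + x) * 1"
      by (rule DERIV_chain2[where g="\<lambda>x. s + x" and x=x, OF d1[rule_format, OF i1(1)]]) (auto intro!: derivative_eq_intros)
    have b: "DERIV (\<lambda>x. f (2 * s - x)) x :> f1 (2 * s - x) * (-1)"
      by (rule DERIV_chain2[where g="\<lambda>x. 2 * s - x" and x=x, OF d1[rule_format, OF i1(2)]]) (auto intro!: derivative_eq_intros)
    show ?thesis unfolding \<psi>_def using DERIV_add[OF a b] by simp
  qed
  obtain z where z: "0 < z" "z < \<eta>" and eq: "\<psi> \<eta> - \<psi> 0 = (\<eta> - 0) * (f1 (s + z) - f1 (2 * s - z))"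
    using MVT2[OF eta(1), of \<psi> "\<lambda>x. f1 (s + x) - f1 (2 * s - x)"] dpsi by force
  have "\<eta> * K \<le> \<eta> * (f1 (2 * s - z) - f1 (s + z))" using g[of z] z eta by (intro mult_left_mono) auto
  also have "\<dots> = \<psi> 0 - \<psi> \<eta>" using eq by (simp add: algebra_simps)
  finally show ?thesis unfolding K_def \<psi>_def by simp
qed



lemma sqrt_pair_bound:
  fixes s \<delta> :: real assumes s: "0 < s" and d: "0 \<le> \<delta>" "\<delta> \<le> 1/4"
  shows "3 * s - s * \<delta>^2 \<le> sqrt (s * (s + \<delta> * s)) + sqrt (2 * s * (2 * s - \<delta> * s))"
proof -
  have p1: "(1 + \<delta>/2 - \<delta>^2/2)^2 \<le> 1 + \<delta>"
  proof -
    have "(1 + \<delta>/2 - \<delta>^2/2)^2 = 1 + \<delta> - \<delta>^2 * (3/4 + \<delta>/2 - \<delta>^2/4)"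
      by (simp add: power2_eq_square field_simps)
    moreover have "0 \<le> \<delta>^2 * (3/4 + \<delta>/2 - \<delta>^2/4)"
    proof -
      have "\<delta>^2 \<le> 1" using d by (simp add: power_le_one)
      thus ?thesis using d by (intro mult_nonneg_nonneg) auto
    qed
    ultimately show ?thesis by linarith
  qed
  have p2: "(1 - \<delta>/4 - \<delta>^2/4)^2 \<le> 1 - \<delta>/2"
  proof -
    have "(1 - \<delta>/4 - \<delta>^2/4)^2 = 1 - \<delta>/2 - \<delta>^2 * (7/16 - \<delta>/8 - \<delta>^2/16)"
      by (simp add: power2_eq_square field_simps)
    moreover have "\<delta>/8 + \<delta>^2/16 \<le> 7/16"
    proof -
      have "\<delta>^2 \<le> 1" using d by (simp add: power_le_one)
      thus ?thesis using d by linarith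
    qed
    hence "0 \<le> \<delta>^2 * (7/16 - \<delta>/8 - \<delta>^2/16)" by (intro mult_nonneg_nonneg) auto
    ultimately show ?thesis by linarith
  qed
  have a: "s * (1 + \<delta>/2 - \<delta>^2/2) \<le> sqrt (s * (s + \<delta> * s))"
  proof (rule real_le_rsqrt)
    have "(s * (1 + \<delta>/2 - \<delta>^2/2))^2 = s^2 * (1 + \<delta>/2 - \<delta>^2/2)^2" by (simp add: power_mult_distrib)
    also have "\<dots> \<le> s^2 * (1 + \<delta>)" using p1 by (intro mult_left_mono) auto
    also have "\<dots> = s * (s + \<delta> * s)" by (simp add: power2_eq_square algebra_simps)
    finally show "(s * (1 + \<delta>/2 - \<delta>^2/2))^2 \<le> s * (s + \<delta> * s)" .
  qed
  have b: "2 * s * (1 - \<delta>/4 - \<delta>^2/4) \<le> sqrt (2 * s * (2 * s - \<delta> * s))"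
  proof (rule real_le_rsqrt)
    have "(2 * s * (1 - \<delta>/4 - \<delta>^2/4))^2 = 4 * s^2 * (1 - \<delta>/4 - \<delta>^2/4)^2" by (simp add: power_mult_distrib)
    also have "\<dots> \<le> 4 * s^2 * (1 - \<delta>/2)" using p2 by (intro mult_left_mono) auto
    also have "\<dots> = 2 * s * (2 * s - \<delta> * s)" by (simp add: power2_eq_square algebra_simps)
    finally show "(2 * s * (1 - \<delta>/4 - \<delta>^2/4))^2 \<le> 2 * s * (2 * s - \<delta> * s)" .
  qed
  have "3 * s - s * \<delta>^2 = s * (1 + \<delta>/2 - \<delta>^2/2) + 2 * s * (1 - \<delta>/4 - \<delta>^2/4)"
    by (simp add: algebra_simps)
  thus ?thesis using a b by linarith
qed

lemma split3:
  fixes g :: "nat \<Rightarrow> real" assumes mk: "2 * m < k"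
    and a: "\<forall>i\<in>{1..m}. g i = a" and b: "\<forall>i\<in>{m+1..2*m}. g i = b"
  shows "(\<Sum>i=1..k. g i) = real m * a + real m * b + (\<Sum>i=2*m+1..k. g i)"
proof -
  have U: "{1..k} = {1..m} \<union> ({m+1..2*m} \<union> {2*m+1..k})" using mk by auto
  have "(\<Sum>i=1..k. g i) = (\<Sum>i=1..m. g i) + ((\<Sum>i=m+1..2*m. g i) + (\<Sum>i=2*m+1..k. g i))"
    unfolding U by (subst sum.union_disjoint, auto, subst sum.union_disjoint, auto)
  also have "(\<Sum>i=1..m. g i) = real m * a" using a by simp
  also have "(\<Sum>i=m+1..2*m. g i) = real m * b" using b by simp
  finally show ?thesis by simp
qed

lemma construction:
  fixes \<phi> f1 f2 :: "real \<Rightarrow> real" and \<sigma> W \<alpha> p0 t :: real and n k :: nat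
  assumes k: "k \<ge> 3" and n: "n \<ge> 1" and sg: "\<sigma> * \<sigma> = 1"
    and d1: "\<forall>x\<in>{0<..<1}. DERIV (\<lambda>x. \<sigma> * \<phi> x) x :> f1 x" and d2: "\<forall>x\<in>{0<..<1}. DERIV f1 x :> f2 x"
    and lb: "\<forall>x\<in>{0<..p0}. W * x powr (\<alpha> - 2) / 2 \<le> f2 x"
    and t: "0 < t" "t \<le> 1/3" "2 * t \<le> p0" and al: "0 < \<alpha>" "\<alpha> < 1" and W: "0 < W"
  shows "ereal (7/64 * (W * 2 powr (\<alpha> - 2) * t powr \<alpha> / 96)^2 * real k powr (2 - 2 * \<alpha>) / real n)
           \<le> minimax_risk n k \<phi>"
proof -
  define s where "s = t / real k"
  define m where "m = (k - 1) div 2"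
  define \<delta> where "\<delta> = 1 / (4 * sqrt (real n))"
  define \<eta> where "\<eta> = \<delta> * s"
  define r where "r = 1 - 3 * real m * s"
  define P where "P i = (if 1 \<le> i \<and> i \<le> m then s else if m < i \<and> i \<le> 2 * m then 2 * s else if i = k then r else 0)" for i
  define Q where "Q i = (if 1 \<le> i \<and> i \<le> m then s + \<eta> else if m < i \<and> i \<le> 2 * m then 2 * s - \<eta> else if i = k then r else 0)" for i
  have kpos: "real k \<ge> 3" using k by simp
  have sp: "0 < s" using t k by (simp add: s_def)
  have s1: "s \<le> t" unfolding s_def using t k by (simp add: divide_le_eq mult.commute)
  have mk: "2 * m < k" unfolding m_def using k by linarith
  have m6: "real k \<le> 6 * real m" unfolding m_def using k by linarith
  have mk2: "2 * real m \<le> real k" using mk by linarith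
  have sqn: "1 \<le> sqrt (real n)" using n by simp
  have dp: "0 < \<delta>" unfolding \<delta>_def using sqn by simp
  have d4: "\<delta> \<le> 1/4" unfolding \<delta>_def using sqn by (simp add: field_simps)
  have d2n: "\<delta>^2 = 1 / (16 * real n)" unfolding \<delta>_def by (simp add: power2_eq_square field_simps)
  have ms: "3 * real m * s \<le> 1/2"
  proof -
    have "3 * real m * s = 3 * (2 * real m) * t / (2 * real k)" by (simp add: s_def)
    also have "\<dots> \<le> 3 * real k * t / (2 * real k)" using mk2 t by (intro divide_right_mono mult_right_mono) auto
    also have "\<dots> = 3 * t / 2" using k by simp
    also have "\<dots> \<le> 1/2" using t by simp
    finally show ?thesis .
  qed
  have r0: "0 \<le> r" using ms by (simp add: r_def)
  have etap: "0 < \<eta>" "\<eta> \<le> s / 4" using dp d4 sp by (auto simp: \<eta>_def)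
  have Pin: "P \<in> prob_vectors k"
  proof -
    have "(\<Sum>i=1..k. P i) = real m * s + real m * (2 * s) + (\<Sum>i=2*m+1..k. P i)"
      by (rule split3[OF mk]) (auto simp: P_def)
    also have "(\<Sum>i=2*m+1..k. P i) = (\<Sum>i=2*m+1..k. if i = k then r else 0)"
      by (rule sum.cong) (auto simp: P_def)
    also have "\<dots> = r" using mk by simp
    finally show ?thesis using sp r0 k mk by (auto simp: prob_vectors_def P_def r_def algebra_simps)
  qed
  have Qin: "Q \<in> prob_vectors k"
  proof -
    have "(\<Sum>i=1..k. Q i) = real m * (s + \<eta>) + real m * (2 * s - \<eta>) + (\<Sum>i=2*m+1..k. Q i)"
      by (rule split3[OF mk]) (auto simp: Q_def)
    also have "(\<Sum>i=2*m+1..k. Q i) = (\<Sum>i=2*m+1..k. if i = k then r else 0)"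
      by (rule sum.cong) (auto simp: Q_def)
    also have "\<dots> = r" using mk by simp
    finally show ?thesis using sp r0 k mk etap by (auto simp: prob_vectors_def Q_def r_def algebra_simps)
  qed
  have diff: "functional \<phi> k P - functional \<phi> k Q
      = real m * (\<phi> s - \<phi> (s + \<eta>)) + real m * (\<phi> (2 * s) - \<phi> (2 * s - \<eta>))"
  proof -
    have "functional \<phi> k P - functional \<phi> k Q = (\<Sum>i=1..k. \<phi> (P i) - \<phi> (Q i))"
      by (simp add: functional_def sum_subtractf)
    also have "\<dots> = real m * (\<phi> s - \<phi> (s + \<eta>)) + real m * (\<phi> (2 * s) - \<phi> (2 * s - \<eta>))
        + (\<Sum>i=2*m+1..k. \<phi> (P i) - \<phi> (Q i))"
      by (rule split3[OF mk]) (auto simp: P_def Q_def)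
    also have "(\<Sum>i=2*m+1..k. \<phi> (P i) - \<phi> (Q i)) = 0"
      by (rule sum.neutral) (auto simp: P_def Q_def)
    finally show ?thesis by simp
  qed
  define K where "K = s * W * (2 * s) powr (\<alpha> - 2) / 4"
  have K0: "0 \<le> K" unfolding K_def using sp W by simp
  have pair: "\<eta> * K \<le> \<sigma> * \<phi> s + \<sigma> * \<phi> (2 * s) - \<sigma> * \<phi> (s + \<eta>) - \<sigma> * \<phi> (2 * s - \<eta>)"
    unfolding K_def
    by (rule pair_ineq[OF d1 d2 lb sp _ _ etap], insert t s1 al W, auto)
  have Dlow: "real m * \<eta> * K \<le> \<sigma> * (functional \<phi> k P - functional \<phi> k Q)"
  proof -
    have "real m * \<eta> * K = real m * (\<eta> * K)" by simp
    also have "\<dots> \<le> real m * (\<sigma> * \<phi> s + \<sigma> * \<phi> (2 * s) - \<sigma> * \<phi> (s + \<eta>) - \<sigma> * \<phi> (2 * s - \<eta>))"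
      using pair by (intro mult_left_mono) auto
    also have "\<dots> = \<sigma> * (functional \<phi> k P - functional \<phi> k Q)" unfolding diff by (simp add: algebra_simps)
    finally show ?thesis .
  qed
  have Dsq: "(real m * \<eta> * K)^2 \<le> (functional \<phi> k P - functional \<phi> k Q)^2"
  proof -
    have "(real m * \<eta> * K)^2 \<le> (\<sigma> * (functional \<phi> k P - functional \<phi> k Q))^2"
      using Dlow K0 etap by (intro power_mono) auto
    also have "\<dots> = (functional \<phi> k P - functional \<phi> k Q)^2"
      by (simp add: power_mult_distrib power2_eq_square[of \<sigma>] sg)
    finally show ?thesis .
  qed
  have aff: "1 - \<delta>^2 \<le> (\<Sum>i=1..k. sqrt (P i * Q i))"
  proof -
    have "(\<Sum>i=1..k. sqrt (P i * Q i)) = real m * sqrt (s * (s + \<delta> * s)) + real m * sqrt (2 * s * (2 * s - \<delta> * s))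
        + (\<Sum>i=2*m+1..k. sqrt (P i * Q i))"
      by (rule split3[OF mk]) (auto simp: P_def Q_def \<eta>_def)
    also have "(\<Sum>i=2*m+1..k. sqrt (P i * Q i)) = (\<Sum>i=2*m+1..k. if i = k then r else 0)"
      by (rule sum.cong) (auto simp: P_def Q_def r0)
    also have "\<dots> = r" using mk by simp
    finally have e: "(\<Sum>i=1..k. sqrt (P i * Q i)) = real m * (sqrt (s * (s + \<delta> * s)) + sqrt (2 * s * (2 * s - \<delta> * s))) + r"
      by (simp add: algebra_simps)
    have "real m * (3 * s - s * \<delta>^2) \<le> real m * (sqrt (s * (s + \<delta> * s)) + sqrt (2 * s * (2 * s - \<delta> * s)))"
      using sqrt_pair_bound[OF sp _ d4] dp by (intro mult_left_mono) auto
    moreover have "real m * s * \<delta>^2 \<le> \<delta>^2"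
      using ms sp by (intro mult_left_le_one_le) auto
    ultimately show ?thesis unfolding e r_def by (simp add: algebra_simps)
  qed
  have Bn: "15/16 \<le> (\<Sum>i=1..k. sqrt (P i * Q i)) ^ n"
  proof -
    have d1': "\<delta>^2 \<le> 1" using d4 dp by (simp add: power_le_one)
    have "15/16 = 1 - real n * (\<delta>^2)" using n by (simp add: d2n)
    also have "\<dots> \<le> (1 - (\<delta>^2)) ^ n" using Bernoulli_inequality[of "- (\<delta>^2)" n] d1' by simp
    also have "\<dots> \<le> (\<Sum>i=1..k. sqrt (P i * Q i)) ^ n" using aff d1' by (intro power_mono) auto
    finally show ?thesis .
  qed
  have TP: "ereal ((15/16 - 1/2) * (functional \<phi> k P - functional \<phi> k Q)^2 / 4) \<le> minimax_risk n k \<phi>"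
    by (rule two_point[OF Pin Qin Bn])
  define E where "E = W * 2 powr (\<alpha> - 2) * t powr \<alpha> / 96"
  have kp: "0 < real k" using k by simp
  have E0: "0 \<le> E" unfolding E_def using W by simp
  have spow: "s * s * s powr (\<alpha> - 2) = t powr \<alpha> / real k powr \<alpha>"
  proof -
    have "s powr \<alpha> = s powr (2 + (\<alpha> - 2))" by simp
    also have "\<dots> = s powr 2 * s powr (\<alpha> - 2)" by (rule powr_add)
    also have "s powr 2 = s * s" using sp by (simp add: power2_eq_square)
    finally have "s * s * s powr (\<alpha> - 2) = s powr \<alpha>" by simp
    also have "\<dots> = t powr \<alpha> / real k powr \<alpha>" unfolding s_def using t kp by (simp add: powr_divide)
    finally show ?thesis .
  qed
  have kpow: "real k powr (1 - \<alpha>) = real k / real k powr \<alpha>" using kp by (simp add: powr_diff)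
  have mK: "real m * \<eta> * K = real m * (W * 2 powr (\<alpha> - 2) * t powr \<alpha>) / (16 * sqrt (real n) * real k powr \<alpha>)"
  proof -
    have "real m * \<eta> * K = real m * \<delta> * W * 2 powr (\<alpha> - 2) * (s * s * s powr (\<alpha> - 2)) / 4"
      unfolding K_def \<eta>_def using sp by (simp add: powr_mult algebra_simps)
    also have "\<dots> = real m * (W * 2 powr (\<alpha> - 2) * t powr \<alpha>) / (16 * sqrt (real n) * real k powr \<alpha>)"
      unfolding spow \<delta>_def by (simp add: field_simps)
    finally show ?thesis .
  qed
  have low: "E * real k powr (1 - \<alpha>) / sqrt (real n) \<le> real m * \<eta> * K"
  proof -
    have A: "0 \<le> W * 2 powr (\<alpha> - 2) * t powr \<alpha> / (16 * sqrt (real n) * real k powr \<alpha>)"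
      using W sqn by simp
    have "E * real k powr (1 - \<alpha>) / sqrt (real n)
        = (real k / 6) * (W * 2 powr (\<alpha> - 2) * t powr \<alpha> / (16 * sqrt (real n) * real k powr \<alpha>))"
      unfolding E_def kpow by (simp add: field_simps)
    also have "\<dots> \<le> real m * (W * 2 powr (\<alpha> - 2) * t powr \<alpha> / (16 * sqrt (real n) * real k powr \<alpha>))"
      using m6 A by (intro mult_right_mono) auto
    also have "\<dots> = real m * \<eta> * K" unfolding mK by simp
    finally show ?thesis .
  qed
  have "7/64 * E^2 * real k powr (2 - 2 * \<alpha>) / real n = 7/64 * (E * real k powr (1 - \<alpha>) / sqrt (real n))^2"
  proof -
    have "(real k powr (1 - \<alpha>))^2 = real k powr (2 - 2 * \<alpha>)"
      using kp by (simp add: power2_eq_square powr_add[symmetric])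
    thus ?thesis using n by (simp add: power_mult_distrib power_divide)
  qed
  also have "\<dots> \<le> 7/64 * (real m * \<eta> * K)^2"
    using low E0 sqn by (intro mult_left_mono power_mono) auto
  also have "\<dots> \<le> 7/64 * (functional \<phi> k P - functional \<phi> k Q)^2" using Dsq by simp
  also have "\<dots> = (15/16 - 1/2) * (functional \<phi> k P - functional \<phi> k Q)^2 / 4" by simp
  finally have "ereal (7/64 * E^2 * real k powr (2 - 2 * \<alpha>) / real n)
      \<le> ereal ((15/16 - 1/2) * (functional \<phi> k P - functional \<phi> k Q)^2 / 4)" by simp
  with TP show ?thesis unfolding E_def by (meson order_trans)
qed



theorem theorem3:
  fixes \<alpha> W c c' :: real and \<phi> :: "real \<Rightarrow> real"
  assumes "0 < \<alpha>" "\<alpha> < 1"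
    and "\<forall>p\<in>{0..1}. 0 \<le> \<phi> p"
    and "\<exists>\<phi>' \<phi>''. (\<forall>x\<in>{0<..1}. (\<phi> has_real_derivative \<phi>' x) (at x within {0<..1})
                                 \<and> (\<phi>' has_real_derivative \<phi>'' x) (at x within {0<..1}))
                   \<and> continuous_on {0<..1} \<phi>''
                   \<and> (\<forall>p\<in>{0<..1}. (2 - \<alpha>) * W * p powr (\<alpha> - 2) + c' \<le> \<bar>\<phi>'' p\<bar>
                                 \<and> \<bar>\<phi>'' p\<bar> \<le> (2 - \<alpha>) * W * p powr (\<alpha> - 2) + c)"
    and "W > 0"
  shows "\<exists>C>0. \<forall>n k. n \<ge> 1 \<longrightarrow> k \<ge> 3 \<longrightarrow>
           ereal (C * real k powr (2 - 2 * \<alpha>) / real n) \<le> minimax_risk n k \<phi>"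
proof -
  note al = assms(1,2) and W = assms(5)
  obtain \<phi>' \<phi>'' where der: "\<forall>x\<in>{0<..1}. (\<phi> has_real_derivative \<phi>' x) (at x within {0<..1})
                                 \<and> (\<phi>' has_real_derivative \<phi>'' x) (at x within {0<..1})"
    and cont: "continuous_on {0<..1} \<phi>''"
    and bnd: "\<forall>p\<in>{0<..1}. (2 - \<alpha>) * W * p powr (\<alpha> - 2) + c' \<le> \<bar>\<phi>'' p\<bar>"
    using assms(4) by blast
  define p0 where "p0 = min 1 (W / (2 * (\<bar>c'\<bar> + 1)))"
  have p0: "0 < p0" "p0 \<le> 1" using W by (auto simp: p0_def)
  have low: "W * p powr (\<alpha> - 2) / 2 + 1 \<le> \<bar>\<phi>'' p\<bar>" if p: "p \<in> {0<..p0}" for p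
  proof -
    have pp: "0 < p" "p \<le> 1" "p \<le> W / (2 * (\<bar>c'\<bar> + 1))" using p by (auto simp: p0_def)
    have "p powr (-1) \<le> p powr (\<alpha> - 2)" using powr_mono'[of "\<alpha> - 2" "-1" p] pp al by simp
    hence ip: "1 / p \<le> p powr (\<alpha> - 2)" using pp by (simp add: powr_minus divide_inverse)
    have "2 * p * (\<bar>c'\<bar> + 1) \<le> W" using pp by (simp add: field_simps)
    hence "\<bar>c'\<bar> + 1 \<le> W / (2 * p)" using pp by (simp add: field_simps)
    also have "W / (2 * p) = W * (1 / p) / 2" by simp
    also have "\<dots> \<le> W * p powr (\<alpha> - 2) / 2" using ip W by (intro divide_right_mono mult_left_mono) auto
    finally have h: "\<bar>c'\<bar> + 1 \<le> W * p powr (\<alpha> - 2) / 2" .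
    have "W * p powr (\<alpha> - 2) \<le> (2 - \<alpha>) * W * p powr (\<alpha> - 2)"
      using al W by (simp add: mult_right_mono)
    moreover have "(2 - \<alpha>) * W * p powr (\<alpha> - 2) + c' \<le> \<bar>\<phi>'' p\<bar>" using bnd pp by auto
    ultimately show ?thesis using h by linarith
  qed
  define \<sigma> :: real where "\<sigma> = (if \<phi>'' p0 > 0 then 1 else -1)"
  have sg: "\<sigma> * \<sigma> = 1" by (simp add: \<sigma>_def)
  have sabs: "\<sigma> * \<phi>'' p = \<bar>\<phi>'' p\<bar>" if p: "p \<in> {0<..p0}" for p
  proof -
    have cp: "continuous_on {p..p0} \<phi>''" using p p0 by (auto intro: continuous_on_subset[OF cont])
    have nz: "\<phi>'' x \<noteq> 0" if "x \<in> {p..p0}" for x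
    proof -
      have xi: "x \<in> {0<..p0}" using that p by auto
      have "0 \<le> W * x powr (\<alpha> - 2) / 2" using W by simp
      thus ?thesis using low[OF xi] by auto
    qed
    have pz: "\<phi>'' p0 \<noteq> 0" using nz p by auto
    show ?thesis
    proof (cases "\<phi>'' p0 > 0")
      case True
      have "\<not> \<phi>'' p < 0"
      proof
        assume "\<phi>'' p < 0"
        then obtain x where "p \<le> x" "x \<le> p0" "\<phi>'' x = 0" using IVT'[of \<phi>'' p 0 p0] True p cp by force
        thus False using nz by auto
      qed
      thus ?thesis using True by (simp add: \<sigma>_def)
    next
      case False
      hence F: "\<phi>'' p0 < 0" using pz by simp
      have "\<not> \<phi>'' p > 0"
      proof
        assume "\<phi>'' p > 0"
        then obtain x where "p \<le> x" "x \<le> p0" "\<phi>'' x = 0" using IVT2'[of \<phi>'' p0 0 p] F p cp by force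
        thus False using nz by auto
      qed
      thus ?thesis using F by (simp add: \<sigma>_def)
    qed
  qed
  have lb: "\<forall>x\<in>{0<..p0}. W * x powr (\<alpha> - 2) / 2 \<le> \<sigma> * \<phi>'' x"
  proof
    fix x assume x: "x \<in> {0<..p0}"
    have "0 \<le> (1::real)" by simp
    thus "W * x powr (\<alpha> - 2) / 2 \<le> \<sigma> * \<phi>'' x" using low[OF x] sabs[OF x] by linarith
  qed
  have atx: "at x within {0<..<1} = at x" if "x \<in> {0<..<1}" for x :: real
    using that by (intro at_within_open) auto
  have d1: "\<forall>x\<in>{0<..<1}. DERIV (\<lambda>x. \<sigma> * \<phi> x) x :> \<sigma> * \<phi>' x"
  proof
    fix x :: real assume x: "x \<in> {0<..<1}"
    have "(\<phi> has_real_derivative \<phi>' x) (at x within {0<..<1})"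
      by (rule has_field_derivative_subset[of _ _ _ "{0<..1}"]) (use der x in auto)
    hence "DERIV \<phi> x :> \<phi>' x" using atx[OF x] by simp
    thus "DERIV (\<lambda>x. \<sigma> * \<phi> x) x :> \<sigma> * \<phi>' x" by (rule DERIV_cmult)
  qed
  have d2: "\<forall>x\<in>{0<..<1}. DERIV (\<lambda>x. \<sigma> * \<phi>' x) x :> \<sigma> * \<phi>'' x"
  proof
    fix x :: real assume x: "x \<in> {0<..<1}"
    have "(\<phi>' has_real_derivative \<phi>'' x) (at x within {0<..<1})"
      by (rule has_field_derivative_subset[of _ _ _ "{0<..1}"]) (use der x in auto)
    hence "DERIV \<phi>' x :> \<phi>'' x" using atx[OF x] by simp
    thus "DERIV (\<lambda>x. \<sigma> * \<phi>' x) x :> \<sigma> * \<phi>'' x" by (rule DERIV_cmult)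
  qed
  define t where "t = min (1/3) (p0 / 2)"
  have t: "0 < t" "t \<le> 1/3" "2 * t \<le> p0" using p0 by (auto simp: t_def)
  define C where "C = 7/64 * (W * 2 powr (\<alpha> - 2) * t powr \<alpha> / 96)^2"
  have C0: "C > 0" unfolding C_def using W t by simp
  show ?thesis
  proof (intro exI[of _ C] conjI allI impI C0)
    fix n k :: nat assume n: "n \<ge> 1" and k: "k \<ge> 3"
    show "ereal (C * real k powr (2 - 2 * \<alpha>) / real n) \<le> minimax_risk n k \<phi>"
      unfolding C_def by (rule construction[OF k n sg d1 d2 lb t al W])
  qed
qed


end
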